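(* If there exists a skew Room frame of type $t^u$, then there exists a $[2,2]$-GDC$(6)$ of type $(6t)^u$ with size $6t^2u(u-1)$.
   Context: Let $S$ be a finite set with a partition $\{S_1,\dots,S_n\}$. An $\{S_1,\dots,S_n\}$-Room frame is an $|S|\times|S|$ array $F$ indexed by $S$ such that: (1) every cell is empty or contains an unordered pair of symbols of $S$; (2) the subarrays $S_i\times S_i$ are empty; (3) each symbol $x\notin S_i$ occurs exactly once in row $s$ and exactly once in column $s$ for every $s\in S_i$; (4) the pairs occurring in $F$ are exactly those $\{s,t\}$ with $(s,t)\in (S\times S)\setminus\bigcup_i(S_i\times S_i)$. It has type $t^u$ if there are $u$ parts, each of size $t$. It is skew if whenever cell $(i,j)$ is filled, cell $(j,i)$ is empty. Ternary codes: a ternary code on a finite set $X$ is a subset $\mathcal C\subseteq\mathbb Z_3^X$; Hamming distance between $u,v$ is $|\{x:u_x\neq v_x\}|$; $u$ has composition $[w_1,w_2]$ if exactly $w_1$ coordinates equal $1$ and exactly $w_2$ equal $2$. A $[w_1,w_2]$-GDC$(d)$ is a triple $(X,\mathcal G,\mathcal C)$ where $\mathcal G$ is a partition of $X$ into groups and $\mathcal C\subseteq\mathbb Z_3^X$ is such that every codeword has composition $[w_1,w_2]$, any two distinct codewords have Hamming distance at least $d$, and every codeword has at most one nonzero coordinate in each group. Its type is the multiset of group sizes, written in exponential notation ($g_1^{t_1}\cdots g_s^{t_s}$ means $t_i$ groups of size $g_i$); its size is $|\mathcal C|$. *)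

theory Defs
  imports Main "HOL-Library.Disjoint_Sets"
begin

text \<open>Only cells indexed by S x S matter.\<close>
definition room_frame :: "'a set \<Rightarrow> 'a set set \<Rightarrow> ('a \<Rightarrow> 'a \<Rightarrow> 'a set) \<Rightarrow> bool" where
  "room_frame S P F \<longleftrightarrow>
     finite S \<and> partition_on S P \<and>
     (\<forall>s\<in>S. \<forall>t\<in>S. F s t = {} \<or> (F s t \<subseteq> S \<and> card (F s t) = 2)) \<and>
     (\<forall>p\<in>P. \<forall>s\<in>p. \<forall>t\<in>p. F s t = {}) \<and>
     (\<forall>p\<in>P. \<forall>s\<in>p. \<forall>x\<in>S - p.
         card {t\<in>S. x \<in> F s t} = 1 \<and> card {t\<in>S. x \<in> F t s} = 1) \<and>
     {F s t | s t. s \<in> S \<and> t \<in> S \<and> F s t \<noteq> {}} =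
     {{s, t} | s t. s \<in> S \<and> t \<in> S \<and> \<not> (\<exists>p\<in>P. s \<in> p \<and> t \<in> p)}"

definition skew_frame :: "'a set \<Rightarrow> ('a \<Rightarrow> 'a \<Rightarrow> 'a set) \<Rightarrow> bool" where
  "skew_frame S F \<longleftrightarrow> (\<forall>s\<in>S. \<forall>t\<in>S. F s t \<noteq> {} \<longrightarrow> F t s = {})"

definition uniform_type :: "'a set set \<Rightarrow> nat \<Rightarrow> nat \<Rightarrow> bool" where
  "uniform_type P g u \<longleftrightarrow> card P = u \<and> (\<forall>p\<in>P. card p = g)"

text \<open>Elements of Z_3^X represented as functions with values in {0,1,2}
  (standing for Z_3), equal to 0 outside X.\<close>
definition ternary_word :: "'a set \<Rightarrow> ('a \<Rightarrow> nat) \<Rightarrow> bool" where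
  "ternary_word X c \<longleftrightarrow> (\<forall>x. c x < 3) \<and> (\<forall>x. x \<notin> X \<longrightarrow> c x = 0)"

definition hamming :: "'a set \<Rightarrow> ('a \<Rightarrow> nat) \<Rightarrow> ('a \<Rightarrow> nat) \<Rightarrow> nat" where
  "hamming X u v = card {x\<in>X. u x \<noteq> v x}"

definition has_composition :: "'a set \<Rightarrow> ('a \<Rightarrow> nat) \<Rightarrow> nat \<Rightarrow> nat \<Rightarrow> bool" where
  "has_composition X c w1 w2 \<longleftrightarrow>
     card {x\<in>X. c x = 1} = w1 \<and> card {x\<in>X. c x = 2} = w2"

definition gdc :: "nat \<Rightarrow> nat \<Rightarrow> nat \<Rightarrow> 'a set \<Rightarrow> 'a set set \<Rightarrow> ('a \<Rightarrow> nat) set \<Rightarrow> bool" where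
  "gdc w1 w2 d X G C \<longleftrightarrow>
     finite X \<and> partition_on X G \<and>
     (\<forall>c\<in>C. ternary_word X c \<and> has_composition X c w1 w2) \<and>
     (\<forall>c\<in>C. \<forall>c'\<in>C. c \<noteq> c' \<longrightarrow> hamming X c c' \<ge> d) \<and>
     (\<forall>c\<in>C. \<forall>g\<in>G. card {x\<in>g. c x \<noteq> 0} \<le> 1)"

end

theory Submission
  imports Defs
begin

definition su :: "nat \<Rightarrow> nat" where "su u = (if u = 2 then 0 else Suc u)"
lemma su_ne: "u < 3 \<Longrightarrow> su u \<noteq> u" "u<3 \<Longrightarrow> su (su u) \<noteq> u" "u<3 \<Longrightarrow> u' < 3 \<Longrightarrow> su u = su u' \<longleftrightarrow> u = u'"
  by (auto simp: su_def)
definition cpts :: "nat\<Rightarrow>nat\<Rightarrow>nat\<Rightarrow>nat\<Rightarrow>nat\<Rightarrow>bool\<Rightarrow>bool\<Rightarrow>(nat\<times>nat\<times>bool) set" where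
 "cpts s t a b u h g = {(s,u,h),(t,u,\<not>h),(a,su u,g),(b,su u,g)}"
definition cval :: "nat\<Rightarrow>nat\<Rightarrow>bool\<Rightarrow>bool\<Rightarrow>nat\<Rightarrow>nat" where
 "cval s t h g x = (if x = s \<or> x = t then (if h=g then 2 else 1) else (if h=g then 1 else 2))"

lemma pt1:
  assumes "distinct [s,t,a,b]" "(x,v,w) \<in> cpts s t a b u h g"
  shows "(x \<in> {s,t} \<and> v = u \<and> w = (if x = s then h else \<not>h)) \<or> (x \<notin> {s,t} \<and> x \<in> {a,b} \<and> v = su u \<and> w = g)"
  using assms by (auto simp: cpts_def)

lemma pair_types:
 fixes s t a b s' t' a' b' u u' :: nat and h g h' g' :: bool
 assumes d: "distinct [s,t,a,b]" "distinct [s',t',a',b']" and uu: "u<3" "u'<3"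
  and p: "(x,v,w) \<in> cpts s t a b u h g" "(x,v,w) \<in> cpts s' t' a' b' u' h' g'"
  and q: "(y,v2,w2) \<in> cpts s t a b u h g" "(y,v2,w2) \<in> cpts s' t' a' b' u' h' g'"
  and pq: "x \<noteq> y"
 shows "u = u' \<and> (x \<in> {s,t} \<longleftrightarrow> x \<in> {s',t'}) \<and> (y \<in> {s,t} \<longleftrightarrow> y \<in> {s',t'})"
  using pt1[OF d(1) p(1)] pt1[OF d(2) p(2)] pt1[OF d(1) q(1)] pt1[OF d(2) q(2)]
   su_ne[OF uu(1)] su_ne[OF uu(2)] su_ne(3)[OF uu] pq d
  by (auto split: if_splits)

lemma pair_val:
 fixes s t a b s' t' a' b' u u' :: nat and h g h' g' :: bool
 assumes d: "distinct [s,t,a,b]" "distinct [s',t',a',b']" and uu: "u<3" "u'<3"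
  and K1: "s = s' \<and> t = t' \<longrightarrow> a = a' \<and> b = b'"
  and K2: "\<not> (s = t' \<and> t = s')"
  and E1: "a = a' \<and> b = b' \<longrightarrow> s = s' \<and> t = t'"
  and E2: "a = b' \<and> b = a' \<longrightarrow> s = s' \<and> t = t'"
  and R: "\<forall>z. s = s' \<and> z \<in> {a,b} \<and> z \<in> {a',b'} \<longrightarrow> t = t'"
  and C: "\<forall>z. t = t' \<and> z \<in> {a,b} \<and> z \<in> {a',b'} \<longrightarrow> s = s'"
  and ne: "(s,t,u,h,g) \<noteq> (s',t',u',h',g')"
  and p: "(x,v,w) \<in> cpts s t a b u h g" "(x,v,w) \<in> cpts s' t' a' b' u' h' g'"
  and q: "(y,v2,w2) \<in> cpts s t a b u h g" "(y,v2,w2) \<in> cpts s' t' a' b' u' h' g'"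
  and pq: "x \<noteq> y"
 shows "cval s t h g x \<noteq> cval s' t' h' g' x"
proof -
  have T: "u = u'" "x \<in> {s,t} \<longleftrightarrow> x \<in> {s',t'}" "y \<in> {s,t} \<longleftrightarrow> y \<in> {s',t'}"
    using pair_types[OF d uu p q pq] by auto
  note P = pt1[OF d(1) p(1)] pt1[OF d(2) p(2)] pt1[OF d(1) q(1)] pt1[OF d(2) q(2)]
  consider "x \<in> {s,t}" "y \<in> {s,t}" | "x \<notin> {s,t}" "y \<notin> {s,t}" | "x \<in> {s,t}" "y \<notin> {s,t}" | "x \<notin> {s,t}" "y \<in> {s,t}"
    by blast
  then show ?thesis
  proof cases
    case 1
    then have "x \<in> {s',t'}" "y \<in> {s',t'}" using T by auto
    with 1 pq have st: "s = s' \<and> t = t'" using K2 by auto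
    then have "a = a'" "b = b'" using K1 by auto
    have "h = h'" using P 1 st by (auto split: if_splits)
    hence "g \<noteq> g'" using ne st T by auto
    thus ?thesis using 1 st \<open>h = h'\<close> by (auto simp: cval_def)
  next
    case 2
    then have "x \<notin> {s',t'}" "y \<notin> {s',t'}" using T by auto
    have ab: "x \<in> {a,b}" "y \<in> {a,b}" "x \<in> {a',b'}" "y \<in> {a',b'}" using P 2 \<open>x \<notin> {s',t'}\<close> \<open>y \<notin> {s',t'}\<close> by auto
    have st: "s = s' \<and> t = t'" using ab pq E1 E2 by auto
    have "g = g'" using P 2 \<open>x \<notin> {s',t'}\<close> by auto
    hence "h \<noteq> h'" using ne st T by auto
    thus ?thesis using 2 st \<open>g = g'\<close> by (auto simp: cval_def)
  next
    case 3
    then have x': "x \<in> {s',t'}" and y': "y \<notin> {s',t'}" using T by auto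
    have yab: "y \<in> {a,b}" "y \<in> {a',b'}" using P 3 y' by auto
    have gg: "g = g'" using P 3 y' by auto
    have "\<not> (x = s \<and> x = s')" 
    proof
      assume xs: "x = s \<and> x = s'"
      hence "t = t'" using R yab by auto
      moreover have "h = h'" using P xs by auto
      ultimately show False using ne xs gg T by auto
    qed
    moreover have "\<not> (x = t \<and> x = t')"
    proof
      assume xs: "x = t \<and> x = t'"
      hence "s = s'" using C yab by auto
      moreover have "h = h'" using P xs d by auto
      ultimately show False using ne xs gg T by auto
    qed
    ultimately have "h \<noteq> h'" using P 3 x' d by (auto split: if_splits)
    thus ?thesis using 3 x' gg by (auto simp: cval_def)
  next
    case 4
    then have x': "x \<notin> {s',t'}" and y': "y \<in> {s',t'}" using T by auto
    have xab: "x \<in> {a,b}" "x \<in> {a',b'}" using P 4 x' by auto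
    have gg: "g = g'" using P 4 x' by auto
    have "\<not> (y = s \<and> y = s')" 
    proof
      assume xs: "y = s \<and> y = s'"
      hence "t = t'" using R xab by auto
      moreover have "h = h'" using P xs by auto
      ultimately show False using ne xs gg T by auto
    qed
    moreover have "\<not> (y = t \<and> y = t')"
    proof
      assume xs: "y = t \<and> y = t'"
      hence "s = s'" using C xab by auto
      moreover have "h = h'" using P xs d by auto
      ultimately show False using ne xs gg T by auto
    qed
    ultimately have "h \<noteq> h'" using P 4 y' d by (auto split: if_splits)
    thus ?thesis using 4 x' gg by (auto simp: cval_def)
  qed
qed

lemma twoP:
 fixes s t a b s' t' a' b' u u' :: nat and h g h' g' :: bool
 assumes d: "distinct [s,t,a,b]" "distinct [s',t',a',b']" and uu: "u<3" "u'<3"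
  and K1: "s = s' \<and> t = t' \<longrightarrow> a = a' \<and> b = b'"
  and K2: "\<not> (s = t' \<and> t = s')"
  and E1: "a = a' \<and> b = b' \<longrightarrow> s = s' \<and> t = t'"
  and E2: "a = b' \<and> b = a' \<longrightarrow> s = s' \<and> t = t'"
  and p: "(x,v,w) \<in> cpts s t a b u h g" "(x,v,w) \<in> cpts s' t' a' b' u' h' g'"
  and q: "(y,v2,w2) \<in> cpts s t a b u h g" "(y,v2,w2) \<in> cpts s' t' a' b' u' h' g'"
  and pq: "x \<noteq> y"
  and xy: "x \<in> {s,t}" "y \<in> {s,t}"
 shows "s = s' \<and> t = t' \<and> a = a' \<and> b = b' \<and> u = u' \<and> h = h'"
proof -
  have T: "u = u'" "x \<in> {s,t} \<longleftrightarrow> x \<in> {s',t'}" "y \<in> {s,t} \<longleftrightarrow> y \<in> {s',t'}"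
    using pair_types[OF d uu p q pq] by auto
  note P = pt1[OF d(1) p(1)] pt1[OF d(2) p(2)] pt1[OF d(1) q(1)] pt1[OF d(2) q(2)]
  have "x \<in> {s',t'}" "y \<in> {s',t'}" using T xy by auto
  with xy pq have st: "s = s' \<and> t = t'" using K2 by auto
  then have "a = a'" "b = b'" using K1 by auto
  have "h = h'" using P xy st by (auto split: if_splits)
  thus ?thesis using st T \<open>a = a'\<close> \<open>b = b'\<close> by auto
qed

lemma twoS:
 fixes s t a b s' t' a' b' u u' :: nat and h g h' g' :: bool
 assumes d: "distinct [s,t,a,b]" "distinct [s',t',a',b']" and uu: "u<3" "u'<3"
  and K1: "s = s' \<and> t = t' \<longrightarrow> a = a' \<and> b = b'"
  and K2: "\<not> (s = t' \<and> t = s')"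
  and E1: "a = a' \<and> b = b' \<longrightarrow> s = s' \<and> t = t'"
  and E2: "a = b' \<and> b = a' \<longrightarrow> s = s' \<and> t = t'"
  and p: "(x,v,w) \<in> cpts s t a b u h g" "(x,v,w) \<in> cpts s' t' a' b' u' h' g'"
  and q: "(y,v2,w2) \<in> cpts s t a b u h g" "(y,v2,w2) \<in> cpts s' t' a' b' u' h' g'"
  and pq: "x \<noteq> y"
  and xy: "x \<notin> {s,t}" "y \<notin> {s,t}"
 shows "s = s' \<and> t = t' \<and> u = u' \<and> g = g'"
proof -
  have T: "u = u'" "x \<in> {s,t} \<longleftrightarrow> x \<in> {s',t'}" "y \<in> {s,t} \<longleftrightarrow> y \<in> {s',t'}"
    using pair_types[OF d uu p q pq] by auto
  note P = pt1[OF d(1) p(1)] pt1[OF d(2) p(2)] pt1[OF d(1) q(1)] pt1[OF d(2) q(2)]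
  have x': "x \<notin> {s',t'}" "y \<notin> {s',t'}" using T xy by auto
  have ab: "x \<in> {a,b}" "y \<in> {a,b}" "x \<in> {a',b'}" "y \<in> {a',b'}" using P xy x' by auto
  have st: "s = s' \<and> t = t'" using ab pq E1 E2 by auto
  have "g = g'" using P xy x' by auto
  thus ?thesis using st T by auto
qed

lemma triple:
 fixes s t a b s' t' a' b' u u' :: nat and h g h' g' :: bool
 assumes d: "distinct [s,t,a,b]" "distinct [s',t',a',b']" and uu: "u<3" "u'<3"
  and K1: "s = s' \<and> t = t' \<longrightarrow> a = a' \<and> b = b'"
  and K2: "\<not> (s = t' \<and> t = s')"
  and E1: "a = a' \<and> b = b' \<longrightarrow> s = s' \<and> t = t'"
  and E2: "a = b' \<and> b = a' \<longrightarrow> s = s' \<and> t = t'"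
  and p: "(x,v,w) \<in> cpts s t a b u h g" "(x,v,w) \<in> cpts s' t' a' b' u' h' g'"
  and q: "(y,v2,w2) \<in> cpts s t a b u h g" "(y,v2,w2) \<in> cpts s' t' a' b' u' h' g'"
  and pq: "x \<noteq> y"
  and r: "(z,v3,w3) \<in> cpts s t a b u h g" "(z,v3,w3) \<in> cpts s' t' a' b' u' h' g'"
  and dz: "z \<noteq> x" "z \<noteq> y"
  and ne: "(s,t,u,h,g) \<noteq> (s',t',u',h',g')"
 shows False
proof -
  note tP = twoP[OF d uu K1 K2 E1 E2]
  note tS = twoS[OF d uu K1 K2 E1 E2]
  note R3 = pt1[OF d(1) r(1)] pt1[OF d(2) r(2)] pt1[OF d(1) p(1)] pt1[OF d(1) q(1)]
  have A: False if "x1 \<in> {s,t}" "y1 \<in> {s,t}" "x1 \<noteq> y1"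
     "(x1,v,w) \<in> cpts s t a b u h g" "(x1,v,w) \<in> cpts s' t' a' b' u' h' g'"
     "(y1,v2,w2) \<in> cpts s t a b u h g" "(y1,v2,w2) \<in> cpts s' t' a' b' u' h' g'"
     "(z1,v3,w3) \<in> cpts s t a b u h g" "(z1,v3,w3) \<in> cpts s' t' a' b' u' h' g'"
     "z1 \<noteq> x1" "z1 \<noteq> y1" for x1 y1 z1 v w v2 w2 v3 w3
  proof -
    have e: "s = s' \<and> t = t' \<and> a = a' \<and> b = b' \<and> u = u' \<and> h = h'" using tP[OF that(4-7,3,1,2)] .
    hence "g \<noteq> g'" using ne by auto
    have "z1 \<notin> {s,t}" using that by auto
    thus False using pt1[OF d(1) that(8)] pt1[OF d(2) that(9)] e \<open>g \<noteq> g'\<close> by auto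
  qed
  have B: False if "x1 \<notin> {s,t}" "y1 \<notin> {s,t}" "x1 \<noteq> y1"
     "(x1,v,w) \<in> cpts s t a b u h g" "(x1,v,w) \<in> cpts s' t' a' b' u' h' g'"
     "(y1,v2,w2) \<in> cpts s t a b u h g" "(y1,v2,w2) \<in> cpts s' t' a' b' u' h' g'"
     "(z1,v3,w3) \<in> cpts s t a b u h g" "(z1,v3,w3) \<in> cpts s' t' a' b' u' h' g'"
     "z1 \<noteq> x1" "z1 \<noteq> y1" for x1 y1 z1 v w v2 w2 v3 w3
  proof -
    have e: "s = s' \<and> t = t' \<and> u = u' \<and> g = g'" using tS[OF that(4-7,3,1,2)] .
    hence "h \<noteq> h'" using ne by auto
    have ab: "x1 \<in> {a,b}" "y1 \<in> {a,b}" using pt1[OF d(1) that(4)] pt1[OF d(1) that(6)] that(1,2) by auto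
    have "z1 \<in> {s,t}" using pt1[OF d(1) that(8)] ab that(3,10,11) by auto
    thus False using pt1[OF d(1) that(8)] pt1[OF d(2) that(9)] e \<open>h \<noteq> h'\<close> by (auto split: if_splits)
  qed
  show False
  proof (cases "x \<in> {s,t}"; cases "y \<in> {s,t}"; cases "z \<in> {s,t}")
  qed (use A[OF _ _ pq p q r dz] A[OF _ _ _ p r q] A[OF _ _ _ q r p] 
           B[OF _ _ pq p q r dz] B[OF _ _ _ p r q] B[OF _ _ _ q r p] dz pq in \<open>metis\<close>)+
qed



lemma rf_D:
  assumes "room_frame S P F"
  shows rf_fin: "finite S" and rf_part: "partition_on S P"
   and rf_cell: "\<And>s t. s\<in>S \<Longrightarrow> t\<in>S \<Longrightarrow> F s t = {} \<or> (F s t \<subseteq> S \<and> card (F s t) = 2)"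
   and rf_empty: "\<And>p s t. p\<in>P \<Longrightarrow> s\<in>p \<Longrightarrow> t\<in>p \<Longrightarrow> F s t = {}"
   and rf_cnt1: "\<And>p s x. p\<in>P \<Longrightarrow> s\<in>p \<Longrightarrow> x\<in>S - p \<Longrightarrow> card {t\<in>S. x \<in> F s t} = 1"
   and rf_cnt2: "\<And>p s x. p\<in>P \<Longrightarrow> s\<in>p \<Longrightarrow> x\<in>S - p \<Longrightarrow> card {t\<in>S. x \<in> F t s} = 1"
   and rf_img: "{F s t | s t. s \<in> S \<and> t \<in> S \<and> F s t \<noteq> {}} =
     {{s, t} | s t. s \<in> S \<and> t \<in> S \<and> \<not> (\<exists>p\<in>P. s \<in> p \<and> t \<in> p)}"
proof -
  note A = assms[unfolded room_frame_def]
  show "finite S" using A by simp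
  show "partition_on S P" using A by simp
  show "\<And>s t. s\<in>S \<Longrightarrow> t\<in>S \<Longrightarrow> F s t = {} \<or> (F s t \<subseteq> S \<and> card (F s t) = 2)" using A by simp
  show "\<And>p s t. p\<in>P \<Longrightarrow> s\<in>p \<Longrightarrow> t\<in>p \<Longrightarrow> F s t = {}" using A by simp
  show "\<And>p s x. p\<in>P \<Longrightarrow> s\<in>p \<Longrightarrow> x\<in>S - p \<Longrightarrow> card {t\<in>S. x \<in> F s t} = 1" using A by simp
  show "\<And>p s x. p\<in>P \<Longrightarrow> s\<in>p \<Longrightarrow> x\<in>S - p \<Longrightarrow> card {t\<in>S. x \<in> F t s} = 1" using A by simp
  show "{F s t | s t. s \<in> S \<and> t \<in> S \<and> F s t \<noteq> {}} =
     {{s, t} | s t. s \<in> S \<and> t \<in> S \<and> \<not> (\<exists>p\<in>P. s \<in> p \<and> t \<in> p)}" using A by simp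
qed

lemma rf_cov: "room_frame S P F \<Longrightarrow> s \<in> S \<Longrightarrow> \<exists>p\<in>P. s \<in> p"
  using partition_onD1[OF rf_part] by blast

lemma rf_parts:
  assumes "room_frame S P F" "p \<in> P" "p' \<in> P" "x \<in> p" "x \<in> p'"
  shows "p = p'"
  using partition_onD2[OF rf_part[OF assms(1)]] assms(2-) unfolding disjoint_def pairwise_def disjnt_def by blast

lemma rf_transpose:
  assumes "room_frame S P F" "skew_frame S F"
  shows "room_frame S P (\<lambda>s t. F t s)" "skew_frame S (\<lambda>s t. F t s)"
proof -
  have e: "{F t s |s t. s \<in> S \<and> t \<in> S \<and> F t s \<noteq> {}} = {F s t |s t. s \<in> S \<and> t \<in> S \<and> F s t \<noteq> {}}"
    by blast
  note A = assms(1)[unfolded room_frame_def]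
  show "room_frame S P (\<lambda>s t. F t s)"
    unfolding room_frame_def e
  proof (intro conjI)
    show "finite S" "partition_on S P" using A by auto
    show "\<forall>s\<in>S. \<forall>t\<in>S. F t s = {} \<or> F t s \<subseteq> S \<and> card (F t s) = 2" using A by auto
    show "\<forall>p\<in>P. \<forall>s\<in>p. \<forall>t\<in>p. F t s = {}" using A by auto
    show "\<forall>p\<in>P. \<forall>s\<in>p. \<forall>x\<in>S - p. card {t \<in> S. x \<in> F t s} = 1 \<and> card {t \<in> S. x \<in> F s t} = 1"
      using A by auto
    show "{F s t |s t. s \<in> S \<and> t \<in> S \<and> F s t \<noteq> {}} =
    {{s, t} |s t. s \<in> S \<and> t \<in> S \<and> \<not> (\<exists>p\<in>P. s \<in> p \<and> t \<in> p)}" using A by auto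
  qed
  show "skew_frame S (\<lambda>s t. F t s)" using assms(2) unfolding skew_frame_def by blast
qed

lemma frame_count:
  fixes S :: "nat set"
  assumes rf: "room_frame S P F" and sk: "skew_frame S F"
  defines "Phi \<equiv> {(s,t). s\<in>S \<and> t\<in>S \<and> F s t \<noteq> {}}"
    and "Oc \<equiv> {(s,t). s\<in>S \<and> t\<in>S \<and> \<not>(\<exists>p\<in>P. s\<in>p \<and> t\<in>p)}"
  shows "card Oc = 2 * card Phi" and "inj_on (\<lambda>(s,t). F s t) Phi"
proof -
  define U where "U = {{s, t} |s t. s \<in> S \<and> t \<in> S \<and> \<not> (\<exists>p\<in>P. s \<in> p \<and> t \<in> p)}"
  have fS: "finite S" using rf by (rule rf_fin)
  have fO: "finite Oc" by (rule finite_subset[of _ "S\<times>S"]) (auto simp: Oc_def fS)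
  have fPhi: "finite Phi" by (rule finite_subset[of _ "S\<times>S"]) (auto simp: Phi_def fS)
  have cov: "\<And>s. s \<in> S \<Longrightarrow> \<exists>p\<in>P. s \<in> p" using rf_cov[OF rf] by blast
  have sub1: "Phi \<subseteq> Oc"
    using rf_empty[OF rf] unfolding Phi_def Oc_def by blast
  have sub2: "prod.swap ` Phi \<subseteq> Oc" using sub1 unfolding Oc_def Phi_def by auto
  have sk1: "\<And>s t. (s,t) \<in> Phi \<Longrightarrow> (t,s) \<notin> Phi" using sk unfolding skew_frame_def Phi_def by blast
  have dis: "Phi \<inter> prod.swap ` Phi = {}"
  proof (rule equals0I)
    fix z assume "z \<in> Phi \<inter> prod.swap ` Phi"
    then obtain s t where "(s,t) \<in> Phi" "(t,s) \<in> Phi" by auto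
    thus False using sk1 by blast
  qed
  have "card (Phi \<union> prod.swap ` Phi) = card Phi + card (prod.swap ` Phi)"
    by (rule card_Un_disjoint) (use fPhi dis in auto)
  also have "card (prod.swap ` Phi) = card Phi" by (rule card_image) simp
  finally have c1: "2 * card Phi \<le> card Oc"
    using card_mono[OF fO, of "Phi \<union> prod.swap ` Phi"] sub1 sub2 by auto
  have img: "(\<lambda>(s,t). F s t) ` Phi = U"
  proof -
    have "(\<lambda>(s,t). F s t) ` Phi = {F s t |s t. s \<in> S \<and> t \<in> S \<and> F s t \<noteq> {}}"
      unfolding Phi_def by auto
    also have "\<dots> = U" using rf_img[OF rf] unfolding U_def by blast
    finally show ?thesis .
  qed
  have fU: "finite U" using img fPhi by (metis finite_imageI)
  have c2: "card U \<le> card Phi" using img card_image_le[OF fPhi] by metis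
  have inj: "inj_on (\<lambda>(s,t). ({s,t}, s < t)) Oc"
  proof (rule inj_onI, clarify)
    fix s t s' t' assume o: "(s,t) \<in> Oc" "(s',t') \<in> Oc" and e: "{s,t} = {s',t'}" "(s<t) = (s'<t')"
    have "s \<noteq> t" using o(1) cov unfolding Oc_def by blast
    with e show "s = s' \<and> t = t'" by (auto simp: doubleton_eq_iff)
  qed
  have "card Oc = card ((\<lambda>(s,t). ({s,t}, s < t)) ` Oc)" using card_image[OF inj] by simp
  also have "\<dots> \<le> card (U \<times> (UNIV::bool set))"
    by (rule card_mono) (use fU in \<open>auto simp: Oc_def U_def\<close>)
  also have "\<dots> = 2 * card U" by (simp add: card_cartesian_product)
  finally have c3: "card Oc \<le> 2 * card U" .
  show "card Oc = 2 * card Phi" using c1 c2 c3 by linarith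
  have "card U = card Phi" using c1 c2 c3 by linarith
  hence "card ((\<lambda>(s,t). F s t) ` Phi) = card Phi" using img by simp
  thus "inj_on (\<lambda>(s,t). F s t) Phi" using inj_on_iff_eq_card[OF fPhi] by blast
qed

lemma no_extra:
  fixes S :: "nat set"
  assumes rf: "room_frame S P F" and sk: "skew_frame S F"
    and s: "s \<in> S" "t \<in> S" "x \<in> F s t" and p: "p \<in> P" "s \<in> p"
  shows "x \<notin> p"
proof
  assume xp: "x \<in> p"
  define Phi where "Phi \<equiv> {(s,t). s\<in>S \<and> t\<in>S \<and> F s t \<noteq> {}}"
  define Oc where "Oc \<equiv> {(s,t). s\<in>S \<and> t\<in>S \<and> \<not>(\<exists>p\<in>P. s\<in>p \<and> t\<in>p)}"
  define Q where "Q s = {y\<in>S. \<exists>p\<in>P. s\<in>p \<and> y\<in>p}" for s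
  define R where "R s = {t\<in>S. F s t \<noteq> {}}" for s
  define Inc where "Inc s = (SIGMA t:S. F s t)" for s
  have fS: "finite S" using rf by (rule rf_fin)
  have cells: "\<And>s t. s \<in> S \<Longrightarrow> t \<in> S \<Longrightarrow> F s t = {} \<or> (F s t \<subseteq> S \<and> card (F s t) = 2)"
    using rf_cell[OF rf] by blast
  have fF: "\<And>s t. s \<in> S \<Longrightarrow> t \<in> S \<Longrightarrow> finite (F s t)"
    using cells by (metis card.infinite finite.emptyI zero_neq_numeral)
  have cnt: "\<And>p s y. p \<in> P \<Longrightarrow> s \<in> p \<Longrightarrow> y \<in> S - p \<Longrightarrow> card {t\<in>S. y \<in> F s t} = 1"
    using rf_cnt1[OF rf] by blast
  have Qp: "\<And>p s. p \<in> P \<Longrightarrow> s \<in> p \<Longrightarrow> S - Q s = S - p"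
    using rf_parts[OF rf] unfolding Q_def by blast
  have cov: "\<And>s. s \<in> S \<Longrightarrow> \<exists>p\<in>P. s \<in> p" using rf_cov[OF rf] by blast
  have fInc: "\<And>s. s \<in> S \<Longrightarrow> finite (Inc s)" unfolding Inc_def using fS fF by auto
  have cInc: "card (Inc s) = 2 * card (R s)" if "s \<in> S" for s
  proof -
    have "card (Inc s) = (\<Sum>t\<in>S. card (F s t))" unfolding Inc_def using fS fF that by simp
    also have "\<dots> = (\<Sum>t\<in>S. if F s t \<noteq> {} then 2 else 0)"
      by (rule sum.cong) (use cells that in auto)
    also have "\<dots> = (\<Sum>t\<in>R s. 2)" unfolding R_def by (subst sum.inter_filter[OF fS, symmetric]) simp
    finally show ?thesis by simp
  qed
  have lower: "card (S - Q s) \<le> card (Inc s)" and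
    strict: "(\<exists>t x. (t,x) \<in> Inc s \<and> x \<in> Q s) \<Longrightarrow> card (S - Q s) < card (Inc s)" if sS: "s \<in> S" for s
  proof -
    obtain p where p: "p \<in> P" "s \<in> p" using cov sS by blast
    define I' where "I' = prod.swap ` (SIGMA y:(S - Q s). {t\<in>S. y \<in> F s t})"
    have "card I' = card (SIGMA y:(S - Q s). {t\<in>S. y \<in> F s t})"
      unfolding I'_def by (rule card_image) simp
    also have "\<dots> = (\<Sum>y\<in>S - Q s. card {t\<in>S. y \<in> F s t})" using fS by simp
    also have "\<dots> = (\<Sum>y\<in>S - Q s. 1)" by (rule sum.cong) (use cnt p Qp in auto)
    finally have cI: "card I' = card (S - Q s)" by simp
    have sub: "I' \<subseteq> Inc s" unfolding I'_def Inc_def by auto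
    show "card (S - Q s) \<le> card (Inc s)" using cI card_mono[OF fInc[OF sS] sub] by simp
    assume "\<exists>t x. (t,x) \<in> Inc s \<and> x \<in> Q s"
    then obtain t x where "(t,x) \<in> Inc s" "x \<in> Q s" by blast
    hence "(t,x) \<notin> I'" unfolding I'_def by auto
    hence "I' \<subset> Inc s" using sub \<open>(t,x) \<in> Inc s\<close> by blast
    from psubset_card_mono[OF fInc[OF sS] this] show "card (S - Q s) < card (Inc s)" using cI by simp
  qed
  have "Oc = (SIGMA s:S. S - Q s)" unfolding Oc_def Q_def by auto
  hence cOc: "card Oc = (\<Sum>s\<in>S. card (S - Q s))" using fS by simp
  have "Phi = (SIGMA s:S. R s)" unfolding Phi_def R_def by auto
  moreover have "\<forall>s\<in>S. finite (R s)" unfolding R_def using fS by simp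
  ultimately have cPhi: "card Phi = (\<Sum>s\<in>S. card (R s))" using fS by simp
  have "(\<Sum>s\<in>S. card (S - Q s)) < (\<Sum>s\<in>S. card (Inc s))"
  proof (rule sum_strict_mono_ex1[OF fS])
    show "\<forall>s\<in>S. card (S - Q s) \<le> card (Inc s)" using lower by blast
    have "x \<in> S" using cells[OF s(1,2)] s(3) by auto
    hence "x \<in> Q s" using xp p unfolding Q_def by blast
    moreover have "(t,x) \<in> Inc s" using s unfolding Inc_def by auto
    ultimately show "\<exists>s\<in>S. card (S - Q s) < card (Inc s)" using strict s(1) by blast
  qed
  also have "\<dots> = 2 * card Phi" unfolding cPhi sum_distrib_left using cInc by simp
  finally show False using frame_count(1)[OF rf sk] cOc unfolding Oc_def Phi_def by simp
qed




definition pt :: "nat \<times> nat \<times> bool \<Rightarrow> nat" where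
  "pt q = (case q of (x,v,w) \<Rightarrow> 6*x + 2*v + (if w then 1 else 0))"

definition dom3 :: "(nat \<times> nat \<times> bool) set" where "dom3 = {q. fst (snd q) < 3}"

lemma pt_eq: "v < 3 \<Longrightarrow> v' < 3 \<Longrightarrow> pt (x,v,w) = pt (x',v',w') \<longleftrightarrow> x = x' \<and> v = v' \<and> w = w'"
  unfolding pt_def by (cases w; cases w'; simp; presburger)

lemma pt_inj: "inj_on pt dom3"
  by (rule inj_onI) (auto simp: dom3_def pt_eq)

lemma su_lt: "u < 3 \<Longrightarrow> su u < 3" by (simp add: su_def)

lemma cpts_dom: "u < 3 \<Longrightarrow> cpts s t a b u h g \<subseteq> dom3"
  by (auto simp: cpts_def dom3_def su_lt)

definition cw :: "nat\<Rightarrow>nat\<Rightarrow>nat\<Rightarrow>nat\<Rightarrow>nat\<Rightarrow>bool\<Rightarrow>bool\<Rightarrow>nat\<Rightarrow>nat" where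
  "cw s t a b u h g z = (if z = pt (s,u,h) \<or> z = pt (t,u,\<not>h) then cval s t h g s
     else if z = pt (a, su u, g) \<or> z = pt (b, su u, g) then cval s t h g a else 0)"

lemma cw_pt:
  assumes "distinct [s,t,a,b]" "u < 3" "q \<in> cpts s t a b u h g"
  shows "cw s t a b u h g (pt q) = cval s t h g (fst q)"
  using assms su_lt[OF assms(2)] by (auto simp: cw_def cpts_def pt_eq cval_def)

lemma cw_zero: "z \<notin> pt ` cpts s t a b u h g \<Longrightarrow> cw s t a b u h g z = 0"
  by (auto simp: cw_def cpts_def)

lemma cval_nz: "cval s t h g x \<noteq> 0" "cval s t h g x < 3" by (auto simp: cval_def)

lemma cw_nz:
  assumes "distinct [s,t,a,b]" "u < 3"
  shows "cw s t a b u h g z \<noteq> 0 \<longleftrightarrow> z \<in> pt ` cpts s t a b u h g"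
proof (cases "z \<in> pt ` cpts s t a b u h g")
  case True
  then obtain q where "q \<in> cpts s t a b u h g" "z = pt q" by blast
  thus ?thesis using cw_pt[OF assms] cval_nz by auto
qed (simp add: cw_zero)

lemma cw_lt3: "cw s t a b u h g z < 3"
  by (auto simp: cw_def cval_nz)

lemma card_cpts: "distinct [s,t,a,b] \<Longrightarrow> card (cpts s t a b u h g) = 4"
  by (auto simp: cpts_def)

lemma card_A: "distinct [s,t,a,b] \<Longrightarrow> u < 3 \<Longrightarrow> card (pt ` cpts s t a b u h g) = 4"
  using card_image[OF inj_on_subset[OF pt_inj cpts_dom]] card_cpts by metis

lemma sym_inj: "distinct [s,t,a,b] \<Longrightarrow> q1 \<in> cpts s t a b u h g \<Longrightarrow> q2 \<in> cpts s t a b u h g \<Longrightarrow> fst q1 = fst q2 \<Longrightarrow> q1 = q2"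
  by (auto simp: cpts_def)

lemma common_pt:
  assumes "p \<in> pt ` A" "p \<in> pt ` B" "A \<subseteq> dom3" "B \<subseteq> dom3"
  shows "\<exists>q. q \<in> A \<and> q \<in> B \<and> p = pt q"
proof -
  obtain q1 q2 where "q1 \<in> A" "q2 \<in> B" "p = pt q1" "p = pt q2" using assms by blast
  moreover have "q1 = q2" using inj_onD[OF pt_inj] calculation assms by blast
  ultimately show ?thesis by blast
qed

lemma ham6:
  fixes w w' :: "nat \<Rightarrow> nat"
  assumes fX: "finite X" and AX: "A \<subseteq> X" and BX: "B \<subseteq> X" and cA: "card A = 4" and cB: "card B = 4"
    and wA: "\<And>z. w z \<noteq> 0 \<longleftrightarrow> z \<in> A" and wB: "\<And>z. w' z \<noteq> 0 \<longleftrightarrow> z \<in> B"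
    and H1: "\<And>p q. p \<in> A \<inter> B \<Longrightarrow> q \<in> A \<inter> B \<Longrightarrow> p \<noteq> q \<Longrightarrow> w p \<noteq> w' p"
    and H2: "\<And>p q r. p \<in> A \<inter> B \<Longrightarrow> q \<in> A \<inter> B \<Longrightarrow> r \<in> A \<inter> B \<Longrightarrow> p \<noteq> q \<Longrightarrow> p \<noteq> r \<Longrightarrow> q \<noteq> r \<Longrightarrow> False"
  shows "6 \<le> hamming X w w'"
proof -
  define D where "D = {z\<in>X. w z \<noteq> w' z}"
  have fA: "finite A" "finite B" using fX AX BX finite_subset by auto
  have fD: "finite D" using fX unfolding D_def by simp
  have cI: "card (A \<inter> B) \<le> 2"
  proof (rule ccontr)
    assume "\<not> card (A \<inter> B) \<le> 2"
    then obtain T where T: "T \<subseteq> A \<inter> B" "card T = 3"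
      using obtain_subset_with_card_n[of 3 "A \<inter> B"] by force
    then obtain p q r where "T = {p,q,r}" "p \<noteq> q" "q \<noteq> r" "p \<noteq> r" using card_3_iff by metis
    thus False using H2 T by blast
  qed
  have sd: "(A - B) \<union> (B - A) \<subseteq> D"
  proof
    fix z assume z: "z \<in> (A - B) \<union> (B - A)"
    hence "w z \<noteq> w' z" using wA[of z] wB[of z] by auto
    thus "z \<in> D" unfolding D_def using z AX BX by auto
  qed
  have cUI: "card (A \<union> B) + card (A \<inter> B) = 8" using card_Un_Int[OF fA] cA cB by simp
  have cAB: "card (A - B) = 4 - card (A \<inter> B)" "card (B - A) = 4 - card (A \<inter> B)"
    using card_Diff_subset_Int[OF ] fA cA cB by (simp_all add: card_Diff_subset_Int Int_commute)
  show ?thesis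
  proof (cases "card (A \<inter> B) = 2")
    case True
    have "A \<union> B \<subseteq> D"
    proof
      fix z assume z: "z \<in> A \<union> B"
      show "z \<in> D"
      proof (cases "z \<in> A \<inter> B")
        case True
        obtain z' where "z' \<in> A \<inter> B" "z' \<noteq> z"
          using \<open>card (A \<inter> B) = 2\<close> True by (metis card_2_iff insert_iff)
        hence "w z \<noteq> w' z" using H1 True by blast
        thus ?thesis unfolding D_def using True AX by auto
      next
        case False thus ?thesis using sd z by blast
      qed
    qed
    hence "card (A \<union> B) \<le> card D" using card_mono[OF fD] by blast
    thus ?thesis using cUI True unfolding hamming_def D_def[symmetric] by simp
  next
    case False
    hence "card (A \<inter> B) \<le> 1" using cI by simp
    have "card ((A - B) \<union> (B - A)) = card (A - B) + card (B - A)"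
      by (rule card_Un_disjoint) (use fA in auto)
    hence "card ((A - B) \<union> (B - A)) \<ge> 6" using cAB \<open>card (A \<inter> B) \<le> 1\<close> by simp
    hence "card D \<ge> 6" using card_mono[OF fD sd] by simp
    thus ?thesis unfolding hamming_def D_def[symmetric] by simp
  qed
qed




lemma cw_dist:
  fixes s t a b s' t' a' b' u u' :: nat and h g h' g' :: bool
  assumes d: "distinct [s,t,a,b]" "distinct [s',t',a',b']" and uu: "u<3" "u'<3"
  and K1: "s = s' \<and> t = t' \<longrightarrow> a = a' \<and> b = b'"
  and K2: "\<not> (s = t' \<and> t = s')"
  and E1: "a = a' \<and> b = b' \<longrightarrow> s = s' \<and> t = t'"
  and E2: "a = b' \<and> b = a' \<longrightarrow> s = s' \<and> t = t'"
  and R: "\<forall>z. s = s' \<and> z \<in> {a,b} \<and> z \<in> {a',b'} \<longrightarrow> t = t'"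
  and C: "\<forall>z. t = t' \<and> z \<in> {a,b} \<and> z \<in> {a',b'} \<longrightarrow> s = s'"
  and ne: "(s,t,u,h,g) \<noteq> (s',t',u',h',g')"
  and fX: "finite X" and AX: "pt ` cpts s t a b u h g \<subseteq> X" and BX: "pt ` cpts s' t' a' b' u' h' g' \<subseteq> X"
  shows "6 \<le> hamming X (cw s t a b u h g) (cw s' t' a' b' u' h' g')"
proof (rule ham6[OF fX AX BX card_A[OF d(1) uu(1)] card_A[OF d(2) uu(2)] cw_nz[OF d(1) uu(1)] cw_nz[OF d(2) uu(2)]])
  note dm = cpts_dom[OF uu(1)] cpts_dom[OF uu(2)]
  show "cw s t a b u h g p \<noteq> cw s' t' a' b' u' h' g' p"
    if p: "p \<in> pt ` cpts s t a b u h g \<inter> pt ` cpts s' t' a' b' u' h' g'"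
     and q: "q \<in> pt ` cpts s t a b u h g \<inter> pt ` cpts s' t' a' b' u' h' g'" and pq: "p \<noteq> q" for p q
  proof -
    obtain p0 where p0: "p0 \<in> cpts s t a b u h g" "p0 \<in> cpts s' t' a' b' u' h' g'" "p = pt p0"
      using common_pt[OF _ _ dm] p by blast
    obtain q0 where q0: "q0 \<in> cpts s t a b u h g" "q0 \<in> cpts s' t' a' b' u' h' g'" "q = pt q0"
      using common_pt[OF _ _ dm] q by blast
    have "fst p0 \<noteq> fst q0" using sym_inj[OF d(1) p0(1) q0(1)] pq p0 q0 by blast
    obtain x v w where px: "p0 = (x,v,w)" by (cases p0) auto
    obtain y v2 w2 where qy: "q0 = (y,v2,w2)" by (cases q0) auto
    have "cval s t h g x \<noteq> cval s' t' h' g' x"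
      by (rule pair_val[OF d uu K1 K2 E1 E2 R C ne]) (use p0 q0 px qy \<open>fst p0 \<noteq> fst q0\<close> in auto)
    thus ?thesis using cw_pt[OF d(1) uu(1) p0(1)] cw_pt[OF d(2) uu(2) p0(2)] p0(3) px by simp
  qed
  show False
    if p: "p \<in> pt ` cpts s t a b u h g \<inter> pt ` cpts s' t' a' b' u' h' g'"
     and q: "q \<in> pt ` cpts s t a b u h g \<inter> pt ` cpts s' t' a' b' u' h' g'"
     and r: "r \<in> pt ` cpts s t a b u h g \<inter> pt ` cpts s' t' a' b' u' h' g'"
     and pq: "p \<noteq> q" "p \<noteq> r" "q \<noteq> r" for p q r
  proof -
    obtain p0 where p0: "p0 \<in> cpts s t a b u h g" "p0 \<in> cpts s' t' a' b' u' h' g'" "p = pt p0"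
      using common_pt[OF _ _ dm] p by blast
    obtain q0 where q0: "q0 \<in> cpts s t a b u h g" "q0 \<in> cpts s' t' a' b' u' h' g'" "q = pt q0"
      using common_pt[OF _ _ dm] q by blast
    obtain r0 where r0: "r0 \<in> cpts s t a b u h g" "r0 \<in> cpts s' t' a' b' u' h' g'" "r = pt r0"
      using common_pt[OF _ _ dm] r by blast
    have "fst p0 \<noteq> fst q0" "fst p0 \<noteq> fst r0" "fst q0 \<noteq> fst r0"
      using sym_inj[OF d(1)] p0 q0 r0 pq by metis+
    obtain x v w where px: "p0 = (x,v,w)" by (cases p0) auto
    obtain y v2 w2 where qy: "q0 = (y,v2,w2)" by (cases q0) auto
    obtain z v3 w3 where rz: "r0 = (z,v3,w3)" by (cases r0) auto
    have m: "(x,v,w) \<in> cpts s t a b u h g" "(x,v,w) \<in> cpts s' t' a' b' u' h' g'"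
      "(y,v2,w2) \<in> cpts s t a b u h g" "(y,v2,w2) \<in> cpts s' t' a' b' u' h' g'"
      "(z,v3,w3) \<in> cpts s t a b u h g" "(z,v3,w3) \<in> cpts s' t' a' b' u' h' g'"
      using p0 q0 r0 px qy rz by auto
    have dd: "x \<noteq> y" "z \<noteq> x" "z \<noteq> y" using \<open>fst p0 \<noteq> fst q0\<close> \<open>fst p0 \<noteq> fst r0\<close> \<open>fst q0 \<noteq> fst r0\<close> px qy rz by auto
    show False
      by (rule triple[OF d uu K1 K2 E1 E2 m(1,2) m(3,4) dd(1) m(5,6) dd(2,3) ne])
  qed
qed

definition sp :: "nat set set \<Rightarrow> nat \<Rightarrow> nat \<Rightarrow> bool" where "sp P x y \<longleftrightarrow> (\<exists>p\<in>P. x \<in> p \<and> y \<in> p)"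

lemma cell_facts:
  fixes S :: "nat set"
  assumes rf: "room_frame S P F" and sk: "skew_frame S F" and st: "s \<in> S" "t \<in> S" "F s t \<noteq> {}"
  shows "F s t = {Min (F s t), Max (F s t)}" "Min (F s t) < Max (F s t)" "Min (F s t) \<in> S" "Max (F s t) \<in> S"
    "\<not> sp P s t" "\<not> sp P (Min (F s t)) (Max (F s t))"
    "\<And>x. x \<in> F s t \<Longrightarrow> \<not> sp P s x" "\<And>x. x \<in> F s t \<Longrightarrow> \<not> sp P t x"
proof -
  have c: "F s t \<subseteq> S" "card (F s t) = 2" using rf_cell[OF rf st(1,2)] st(3) by auto
  then obtain x y where xy: "F s t = {x,y}" "x \<noteq> y" using card_2_iff by metis
  have mm: "Min (F s t) = min x y" "Max (F s t) = max x y" using xy by auto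
  show e: "F s t = {Min (F s t), Max (F s t)}" using xy mm by (auto simp: min_def max_def)
  show "Min (F s t) < Max (F s t)" using xy mm by auto
  show "Min (F s t) \<in> S" "Max (F s t) \<in> S" using e c by auto
  show "\<not> sp P s t" unfolding sp_def using rf_empty[OF rf] st(3) by blast
  have "F s t \<in> {F s t |s t. s \<in> S \<and> t \<in> S \<and> F s t \<noteq> {}}" using st by blast
  hence "F s t \<in> {{s, t} |s t. s \<in> S \<and> t \<in> S \<and> \<not> (\<exists>p\<in>P. s \<in> p \<and> t \<in> p)}"
    using rf_img[OF rf] by simp
  then obtain x' y' where "F s t = {x',y'}" "\<not> (\<exists>p\<in>P. x' \<in> p \<and> y' \<in> p)" by blast
  thus "\<not> sp P (Min (F s t)) (Max (F s t))" using e unfolding sp_def by (auto simp: doubleton_eq_iff)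
  show "\<And>x. x \<in> F s t \<Longrightarrow> \<not> sp P s x" unfolding sp_def using no_extra[OF rf sk st(1,2)] by blast
  show "\<And>x. x \<in> F s t \<Longrightarrow> \<not> sp P t x"
  proof
    fix x assume x: "x \<in> F s t" "sp P t x"
    then obtain p where "p \<in> P" "t \<in> p" "x \<in> p" unfolding sp_def by blast
    with no_extra[OF rf_transpose[OF rf sk] st(2) st(1), of x p] x(1) show False by simp
  qed
qed

lemma sp_refl: "room_frame S P F \<Longrightarrow> x \<in> S \<Longrightarrow> sp P x x"
  using rf_cov[of S P F x] unfolding sp_def by blast

lemma card1_eq: assumes "card A = 1" "x \<in> A" "y \<in> A" shows "x = y"
proof -
  obtain z where "A = {z}" using card_1_singletonE[OF assms(1)] by blast
  thus ?thesis using assms by simp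
qed

lemma frame_dist:
  fixes S :: "nat set"
  assumes rf: "room_frame S P F" and sk: "skew_frame S F"
    and c1: "s \<in> S" "t \<in> S" "F s t \<noteq> {}" and c2: "s' \<in> S" "t' \<in> S" "F s' t' \<noteq> {}"
    and uu: "u < 3" "u' < 3" and ne: "(s,t,u,h,g) \<noteq> (s',t',u',h',g')"
    and fX: "finite X" and SX: "pt ` (S \<times> {..<3} \<times> UNIV) \<subseteq> X"
  shows "6 \<le> hamming X (cw s t (Min (F s t)) (Max (F s t)) u h g) (cw s' t' (Min (F s' t')) (Max (F s' t')) u' h' g')"
proof -
  define a where "a = Min (F s t)"
  define b where "b = Max (F s t)"
  define a' where "a' = Min (F s' t')"
  define b' where "b' = Max (F s' t')"
  note f1 = cell_facts[OF rf sk c1, folded a_def b_def]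
  note f2 = cell_facts[OF rf sk c2, folded a'_def b'_def]
  have sr: "\<And>x. x \<in> S \<Longrightarrow> sp P x x" using sp_refl[OF rf] .
  have d1: "distinct [s,t,a,b]"
  proof -
    have "s \<noteq> t" using f1(5) sr[OF c1(1)] by auto
    moreover have "a \<noteq> b" using f1(2) by simp
    moreover have ab: "a \<in> F s t" "b \<in> F s t" using f1(1) by auto
    moreover have "s \<noteq> a" "t \<noteq> a" using f1(7)[OF ab(1)] f1(8)[OF ab(1)] sr c1 by auto
    moreover have "s \<noteq> b" "t \<noteq> b" using f1(7)[OF ab(2)] f1(8)[OF ab(2)] sr c1 by auto
    ultimately show ?thesis by simp
  qed
  have d2: "distinct [s',t',a',b']"
  proof -
    have "s' \<noteq> t'" using f2(5) sr[OF c2(1)] by auto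
    moreover have "a' \<noteq> b'" using f2(2) by simp
    moreover have ab: "a' \<in> F s' t'" "b' \<in> F s' t'" using f2(1) by auto
    moreover have "s' \<noteq> a'" "t' \<noteq> a'" using f2(7)[OF ab(1)] f2(8)[OF ab(1)] sr c2 by auto
    moreover have "s' \<noteq> b'" "t' \<noteq> b'" using f2(7)[OF ab(2)] f2(8)[OF ab(2)] sr c2 by auto
    ultimately show ?thesis by simp
  qed
  have K1: "s = s' \<and> t = t' \<longrightarrow> a = a' \<and> b = b'" unfolding a_def b_def a'_def b'_def by auto
  have K2: "\<not> (s = t' \<and> t = s')" using sk c1 c2 unfolding skew_frame_def by auto
  have injF: "inj_on (\<lambda>(s,t). F s t) {(s,t). s\<in>S \<and> t\<in>S \<and> F s t \<noteq> {}}" by (rule frame_count(2)[OF rf sk])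
  have E: "F s t = F s' t' \<Longrightarrow> s = s' \<and> t = t'" using inj_onD[OF injF, of "(s,t)" "(s',t')"] c1 c2 by auto
  have E1: "a = a' \<and> b = b' \<longrightarrow> s = s' \<and> t = t'" using E f1(1) f2(1) by metis
  have E2: "a = b' \<and> b = a' \<longrightarrow> s = s' \<and> t = t'" using E f1(1) f2(1) by (metis insert_commute)
  have R: "\<forall>z. s = s' \<and> z \<in> {a,b} \<and> z \<in> {a',b'} \<longrightarrow> t = t'"
  proof (intro allI impI)
    fix z assume z: "s = s' \<and> z \<in> {a,b} \<and> z \<in> {a',b'}"
    obtain p where p: "p \<in> P" "s \<in> p" using rf_cov[OF rf c1(1)] by blast
    have zF: "z \<in> F s t" "z \<in> F s t'" using z f1(1) f2(1) by auto
    have "z \<notin> p" using f1(7)[OF zF(1)] p unfolding sp_def by blast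
    moreover have "z \<in> S" using zF f1(3,4) f1(1) by auto
    ultimately have cz: "card {t\<in>S. z \<in> F s t} = 1" using rf_cnt1[OF rf p] by blast
    show "t = t'" using card1_eq[OF cz, of t t'] zF c1(2) c2(2) z by blast
  qed
  have C: "\<forall>z. t = t' \<and> z \<in> {a,b} \<and> z \<in> {a',b'} \<longrightarrow> s = s'"
  proof (intro allI impI)
    fix z assume z: "t = t' \<and> z \<in> {a,b} \<and> z \<in> {a',b'}"
    obtain p where p: "p \<in> P" "t \<in> p" using rf_cov[OF rf c1(2)] by blast
    have zF: "z \<in> F s t" "z \<in> F s' t" using z f1(1) f2(1) by auto
    have "z \<notin> p" using f1(8)[OF zF(1)] p unfolding sp_def by blast
    moreover have "z \<in> S" using zF f1(3,4) f1(1) by auto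
    ultimately have cz: "card {s\<in>S. z \<in> F s t} = 1" using rf_cnt2[OF rf p] by blast
    show "s = s'" using card1_eq[OF cz, of s s'] zF c1(1) c2(1) z by blast
  qed
  have AX: "pt ` cpts s t a b u h g \<subseteq> X" using SX c1 f1(3,4) uu su_lt[OF uu(1)] by (auto simp: cpts_def)
  have BX: "pt ` cpts s' t' a' b' u' h' g' \<subseteq> X" using SX c2 f2(3,4) uu su_lt[OF uu(2)] by (auto simp: cpts_def)
  show ?thesis using cw_dist[OF d1 d2 uu K1 K2 E1 E2 R C ne fX AX BX] unfolding a_def b_def a'_def b'_def .
qed




lemma cw_level:
  assumes d: "distinct [s,t,a,b]" and uu: "u < 3" and AX: "pt ` cpts s t a b u h g \<subseteq> X" and k: "k \<noteq> 0"
  shows "{z\<in>X. cw s t a b u h g z = k} = pt ` {q\<in>cpts s t a b u h g. cval s t h g (fst q) = k}"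
proof
  show "{z\<in>X. cw s t a b u h g z = k} \<subseteq> pt ` {q\<in>cpts s t a b u h g. cval s t h g (fst q) = k}"
  proof
    fix z assume z: "z \<in> {z\<in>X. cw s t a b u h g z = k}"
    hence "z \<in> pt ` cpts s t a b u h g" using cw_nz[OF d uu] k by auto
    then obtain q where "q \<in> cpts s t a b u h g" "z = pt q" by blast
    thus "z \<in> pt ` {q\<in>cpts s t a b u h g. cval s t h g (fst q) = k}" using z cw_pt[OF d uu] by auto
  qed
  show "pt ` {q\<in>cpts s t a b u h g. cval s t h g (fst q) = k} \<subseteq> {z\<in>X. cw s t a b u h g z = k}"
    using AX cw_pt[OF d uu] by auto
qed

lemma cw_word:
  assumes d: "distinct [s,t,a,b]" and uu: "u < 3" and AX: "pt ` cpts s t a b u h g \<subseteq> X"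
  shows "ternary_word X (cw s t a b u h g) \<and> has_composition X (cw s t a b u h g) 2 2"
proof -
  have inj: "inj_on pt (cpts s t a b u h g)" using inj_on_subset[OF pt_inj cpts_dom[OF uu]] .
  have t: "ternary_word X (cw s t a b u h g)"
    unfolding ternary_word_def using cw_lt3 cw_zero AX by blast
  have su: "su u < 3" using su_lt[OF uu] .
  have e1: "{q\<in>cpts s t a b u h g. cval s t h g (fst q) = 1} =
      (if h = g then {(a,su u,g),(b,su u,g)} else {(s,u,h),(t,u,\<not>h)})"
    using d by (auto simp: cpts_def cval_def)
  have e2: "{q\<in>cpts s t a b u h g. cval s t h g (fst q) = 2} =
      (if h = g then {(s,u,h),(t,u,\<not>h)} else {(a,su u,g),(b,su u,g)})"
    using d by (auto simp: cpts_def cval_def)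
  have c1: "card {q\<in>cpts s t a b u h g. cval s t h g (fst q) = 1} = 2" unfolding e1 using d by auto
  have c2: "card {q\<in>cpts s t a b u h g. cval s t h g (fst q) = 2} = 2" unfolding e2 using d by auto
  have "card {z\<in>X. cw s t a b u h g z = 1} = 2"
  proof -
    have "card (pt ` {q\<in>cpts s t a b u h g. cval s t h g (fst q) = 1}) = card {q\<in>cpts s t a b u h g. cval s t h g (fst q) = 1}"
      by (rule card_image[OF inj_on_subset[OF inj]]) auto
    thus ?thesis using cw_level[OF d uu AX, of 1] c1 by simp
  qed
  moreover have "card {z\<in>X. cw s t a b u h g z = 2} = 2"
  proof -
    have "card (pt ` {q\<in>cpts s t a b u h g. cval s t h g (fst q) = 2}) = card {q\<in>cpts s t a b u h g. cval s t h g (fst q) = 2}"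
      by (rule card_image[OF inj_on_subset[OF inj]]) auto
    thus ?thesis using cw_level[OF d uu AX, of 2] c2 by simp
  qed
  ultimately show ?thesis using t unfolding has_composition_def by simp
qed

lemma cw_group:
  assumes d: "distinct [s,t,a,b]" and uu: "u < 3"
    and one: "\<And>x y. x \<in> {s,t,a,b} \<Longrightarrow> y \<in> {s,t,a,b} \<Longrightarrow> x \<in> p \<Longrightarrow> y \<in> p \<Longrightarrow> x = y"
  shows "card {z \<in> pt ` (p \<times> {..<3} \<times> (UNIV :: bool set)). cw s t a b u h g z \<noteq> 0} \<le> 1"
proof -
  have key: "\<exists>q. q \<in> cpts s t a b u h g \<and> fst q \<in> p \<and> z = pt q"
    if z: "z \<in> {z \<in> pt ` (p \<times> {..<3} \<times> (UNIV :: bool set)). cw s t a b u h g z \<noteq> 0}" for z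
  proof -
    obtain q where q: "q \<in> cpts s t a b u h g" "z = pt q" using z cw_nz[OF d uu] by auto
    obtain q' where q': "q' \<in> p \<times> {..<3} \<times> (UNIV :: bool set)" "z = pt q'" using z by auto
    have "q \<in> dom3" using q(1) cpts_dom[OF uu] by blast
    moreover have "q' \<in> dom3" using q'(1) by (auto simp: dom3_def)
    ultimately have "q = q'" using inj_onD[OF pt_inj, of q q'] q(2) q'(2) by simp
    thus ?thesis using q q' by auto
  qed
  have fin: "finite {z \<in> pt ` (p \<times> {..<3} \<times> (UNIV :: bool set)). cw s t a b u h g z \<noteq> 0}"
  proof (rule finite_subset[of _ "pt ` cpts s t a b u h g"])
    show "finite (pt ` cpts s t a b u h g)" by (simp add: cpts_def)
  qed (use cw_nz[OF d uu] in blast)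
  have all: "\<forall>z1\<in>{z \<in> pt ` (p \<times> {..<3} \<times> (UNIV :: bool set)). cw s t a b u h g z \<noteq> 0}.
     \<forall>z2\<in>{z \<in> pt ` (p \<times> {..<3} \<times> (UNIV :: bool set)). cw s t a b u h g z \<noteq> 0}. z1 = z2"
  proof (intro ballI)
    fix z1 z2 assume z1: "z1 \<in> {z \<in> pt ` (p \<times> {..<3} \<times> (UNIV :: bool set)). cw s t a b u h g z \<noteq> 0}"
      and z2: "z2 \<in> {z \<in> pt ` (p \<times> {..<3} \<times> (UNIV :: bool set)). cw s t a b u h g z \<noteq> 0}"
    obtain q1 where q1: "q1 \<in> cpts s t a b u h g" "fst q1 \<in> p" "z1 = pt q1" using key[OF z1] by blast
    obtain q2 where q2: "q2 \<in> cpts s t a b u h g" "fst q2 \<in> p" "z2 = pt q2" using key[OF z2] by blast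
    have "fst q1 \<in> {s,t,a,b}" "fst q2 \<in> {s,t,a,b}" using q1 q2 by (auto simp: cpts_def)
    hence "fst q1 = fst q2" using one q1 q2 by blast
    thus "z1 = z2" using sym_inj[OF d q1(1) q2(1)] q1 q2 by simp
  qed
  thus ?thesis using card_le_Suc0_iff_eq[OF fin] by simp
qed




lemma cell_all:
  fixes S :: "nat set"
  assumes rf: "room_frame S P F" and sk: "skew_frame S F" and c: "s \<in> S" "t \<in> S" "F s t \<noteq> {}"
    and uu: "u < 3" and SX: "pt ` (S \<times> {..<3} \<times> UNIV) \<subseteq> X"
  shows "ternary_word X (cw s t (Min (F s t)) (Max (F s t)) u h g) \<and>
         has_composition X (cw s t (Min (F s t)) (Max (F s t)) u h g) 2 2 \<and>
         (\<forall>p\<in>P. card {z \<in> pt ` (p \<times> {..<3} \<times> (UNIV :: bool set)). cw s t (Min (F s t)) (Max (F s t)) u h g z \<noteq> 0} \<le> 1)"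
proof -
  define a where "a = Min (F s t)"
  define b where "b = Max (F s t)"
  note f1 = cell_facts[OF rf sk c, folded a_def b_def]
  have sr: "\<And>x. x \<in> S \<Longrightarrow> sp P x x" using sp_refl[OF rf] .
  have ab: "a \<in> F s t" "b \<in> F s t" using f1(1) by auto
  have d1: "distinct [s,t,a,b]"
  proof -
    have "s \<noteq> t" using f1(5) sr[OF c(1)] by auto
    moreover have "a \<noteq> b" using f1(2) by simp
    moreover have "s \<noteq> a" "t \<noteq> a" using f1(7)[OF ab(1)] f1(8)[OF ab(1)] sr c by auto
    moreover have "s \<noteq> b" "t \<noteq> b" using f1(7)[OF ab(2)] f1(8)[OF ab(2)] sr c by auto
    ultimately show ?thesis by simp
  qed
  have AX: "pt ` cpts s t a b u h g \<subseteq> X" using SX c f1(3,4) uu su_lt[OF uu] by (auto simp: cpts_def)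
  have nsp: "\<not> sp P x y" if "x \<in> {s,t,a,b}" "y \<in> {s,t,a,b}" "x \<noteq> y" for x y
  proof -
    have sym: "sp P x y = sp P y x" for x y unfolding sp_def by blast
    show ?thesis using that f1(5,6) f1(7)[OF ab(1)] f1(7)[OF ab(2)] f1(8)[OF ab(1)] f1(8)[OF ab(2)] sym
      by auto
  qed
  have grp: "card {z \<in> pt ` (p \<times> {..<3} \<times> (UNIV :: bool set)). cw s t a b u h g z \<noteq> 0} \<le> 1" if p: "p \<in> P" for p
  proof (rule cw_group[OF d1 uu])
    fix x y assume "x \<in> {s,t,a,b}" "y \<in> {s,t,a,b}" "x \<in> p" "y \<in> p"
    thus "x = y" using nsp p unfolding sp_def by blast
  qed
  show ?thesis using cw_word[OF d1 uu AX] grp unfolding a_def b_def by blast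
qed

theorem mainTheorem5:
  fixes t u :: nat
  assumes "\<exists>(S :: nat set) P F. room_frame S P F \<and> skew_frame S F \<and> uniform_type P t u"
  shows "\<exists>(X :: nat set) G C. gdc 2 2 6 X G C \<and> uniform_type G (6 * t) u \<and>
           card C = 6 * t ^ 2 * u * (u - 1)"
proof -
  obtain S :: "nat set" and P F where rf: "room_frame S P F" and sk: "skew_frame S F"
    and ut: "uniform_type P t u" using assms by blast
  define Phi where "Phi = {(x,y). x\<in>S \<and> y\<in>S \<and> F x y \<noteq> {}}"
  define Oc where "Oc = {(x,y). x\<in>S \<and> y\<in>S \<and> \<not>(\<exists>p\<in>P. x\<in>p \<and> y\<in>p)}"
  define J :: "((nat\<times>nat)\<times>(nat\<times>bool\<times>bool)) set" where "J = Phi \<times> ({..<3} \<times> UNIV)"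
  define cwf :: "((nat\<times>nat)\<times>(nat\<times>bool\<times>bool)) \<Rightarrow> nat \<Rightarrow> nat"
    where "cwf = (\<lambda>((x,y),(v,h,g)). cw x y (Min (F x y)) (Max (F x y)) v h g)"
  define X where "X = pt ` (S \<times> {..<3} \<times> (UNIV :: bool set))"
  define blk where "blk p = pt ` (p \<times> {..<3} \<times> (UNIV :: bool set))" for p
  define G where "G = blk ` P"
  define C where "C = cwf ` J"
  have fS: "finite S" by (rule rf_fin[OF rf])
  have fX: "finite X" unfolding X_def using fS by simp
  have SX: "pt ` (S \<times> {..<3} \<times> UNIV) \<subseteq> X" unfolding X_def by simp
  have fPhi: "finite Phi" by (rule finite_subset[of _ "S\<times>S"]) (auto simp: Phi_def fS)
  have fJ: "finite J" unfolding J_def using fPhi by simp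
  have key: "6 \<le> hamming X (cwf i) (cwf j)" if ij: "i \<in> J" "j \<in> J" "i \<noteq> j" for i j
  proof -
    obtain x y v h g where i: "i = ((x,y),(v,h,g))" by (metis prod.exhaust)
    obtain x' y' v' h' g' where j: "j = ((x',y'),(v',h',g'))" by (metis prod.exhaust)
    have c1: "x \<in> S" "y \<in> S" "F x y \<noteq> {}" "v < 3" using ij(1) i unfolding J_def Phi_def by auto
    have c2: "x' \<in> S" "y' \<in> S" "F x' y' \<noteq> {}" "v' < 3" using ij(2) j unfolding J_def Phi_def by auto
    have ne: "(x,y,v,h,g) \<noteq> (x',y',v',h',g')" using ij(3) i j by auto
    show ?thesis using frame_dist[OF rf sk c1(1-3) c2(1-3) c1(4) c2(4) ne fX SX] i j
      unfolding cwf_def by simp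
  qed
  have inj: "inj_on cwf J"
  proof (rule inj_onI, rule ccontr)
    fix i j assume "i \<in> J" "j \<in> J" "cwf i = cwf j" "i \<noteq> j"
    hence "6 \<le> hamming X (cwf i) (cwf j)" using key by blast
    moreover have "hamming X (cwf i) (cwf j) = 0" unfolding hamming_def using \<open>cwf i = cwf j\<close> by simp
    ultimately show False by simp
  qed
  have c4: "card (UNIV :: (bool \<times> bool) set) = 4"
    by (simp add: card_UNIV_bool card_cartesian_product flip: UNIV_Times_UNIV)
  have cC: "card C = 12 * card Phi"
  proof -
    have "card C = card J" unfolding C_def by (rule card_image[OF inj])
    also have "\<dots> = card Phi * (3 * 4)" unfolding J_def by (simp only: card_cartesian_product c4 card_lessThan)
    finally show ?thesis by simp
  qed
  have cO2: "card Oc = 2 * card Phi" unfolding Oc_def Phi_def by (rule frame_count(1)[OF rf sk])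
  have part: "partition_on S P" by (rule rf_part[OF rf])
  have sub: "\<And>p. p \<in> P \<Longrightarrow> p \<subseteq> S" using partition_onD1[OF part] by blast
  have cp: "\<And>p. p \<in> P \<Longrightarrow> card p = t" using ut unfolding uniform_type_def by blast
  have cPu: "card P = u" using ut unfolding uniform_type_def by blast
  have cS: "card S = t * u"
  proof -
    have "card S = (\<Sum>p\<in>P. card p)"
      by (rule product_partition[OF part]) (use sub fS finite_subset in blast)
    also have "\<dots> = (\<Sum>p\<in>P. t)" using cp by simp
    finally show ?thesis using cPu by simp
  qed
  have cOc: "card Oc = (t*u) * (t*u - t)"
  proof -
    have "Oc = (SIGMA x:S. {y\<in>S. \<not>(\<exists>p\<in>P. x\<in>p \<and> y\<in>p)})" unfolding Oc_def by auto
    hence "card Oc = (\<Sum>x\<in>S. card {y\<in>S. \<not>(\<exists>p\<in>P. x\<in>p \<and> y\<in>p)})" using fS by simp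
    also have "\<dots> = (\<Sum>x\<in>S. t*u - t)"
    proof (rule sum.cong)
      fix x assume x: "x \<in> S"
      obtain p where p: "p \<in> P" "x \<in> p" using rf_cov[OF rf x] by blast
      have "{y\<in>S. \<not>(\<exists>p\<in>P. x\<in>p \<and> y\<in>p)} = S - p" using p rf_parts[OF rf] by blast
      thus "card {y\<in>S. \<not>(\<exists>p\<in>P. x\<in>p \<and> y\<in>p)} = t*u - t"
        using card_Diff_subset[OF finite_subset[OF sub[OF p(1)] fS] sub[OF p(1)]] cS cp[OF p(1)] by simp
    qed simp
    finally show ?thesis using cS by simp
  qed
  have cardC: "card C = 6 * t ^ 2 * u * (u - 1)"
  proof -
    have "t*u - t = t*(u-1)" by (simp add: diff_mult_distrib2)
    hence "card C = 6 * ((t*u) * (t*(u-1)))" using cC cO2 cOc by simp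
    thus ?thesis by (simp add: power2_eq_square algebra_simps)
  qed
  have words: "\<forall>c\<in>C. ternary_word X c \<and> has_composition X c 2 2 \<and> (\<forall>gg\<in>G. card {z\<in>gg. c z \<noteq> 0} \<le> 1)"
  proof
    fix c assume "c \<in> C"
    then obtain x y v h g where i: "((x,y),(v,h,g)) \<in> J" "c = cwf ((x,y),(v,h,g))" unfolding C_def
      by (metis imageE prod.exhaust)
    have c1: "x \<in> S" "y \<in> S" "F x y \<noteq> {}" "v < 3" using i(1) unfolding J_def Phi_def by auto
    show "ternary_word X c \<and> has_composition X c 2 2 \<and> (\<forall>gg\<in>G. card {z\<in>gg. c z \<noteq> 0} \<le> 1)"
      using cell_all[OF rf sk c1(1-3) c1(4) SX, of h g] i(2) unfolding cwf_def G_def blk_def by simp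
  qed
  have blk_mem: "pt (x,0,False) \<in> blk p" if "x \<in> p" for x p unfolding blk_def using that by force
  have blk_iff: "pt (x,v,w) \<in> blk p \<longleftrightarrow> x \<in> p" if "v < 3" for x v w p
  proof
    assume "pt (x,v,w) \<in> blk p"
    then obtain q where "q \<in> p \<times> {..<3} \<times> UNIV" "pt (x,v,w) = pt q" unfolding blk_def by blast
    thus "x \<in> p" using that by (cases q) (auto simp: pt_eq)
  qed (use that in \<open>auto simp: blk_def\<close>)
  have blk_inj: "inj_on blk P"
  proof (rule inj_onI)
    fix p q assume pq: "p \<in> P" "q \<in> P" "blk p = blk q"
    have "p \<noteq> {}" using partition_onD3[OF part] pq(1) by blast
    then obtain x where "x \<in> p" by blast
    hence "x \<in> q" using blk_mem[of x p] pq(3) blk_iff[of 0 x False q] by simp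
    thus "p = q" using rf_parts[OF rf pq(1,2) \<open>x \<in> p\<close>] by simp
  qed
  have blk_card: "card (blk p) = 6 * t" if "p \<in> P" for p
  proof -
    have "inj_on pt (p \<times> {..<3} \<times> (UNIV :: bool set))" by (rule inj_on_subset[OF pt_inj]) (auto simp: dom3_def)
    hence "card (blk p) = card (p \<times> {..<3::nat} \<times> (UNIV :: bool set))" unfolding blk_def by (rule card_image)
    also have "\<dots> = card p * 6" by (simp add: card_cartesian_product card_UNIV_bool)
    finally show ?thesis using cp[OF that] by simp
  qed
  have ut2: "uniform_type G (6 * t) u"
    unfolding uniform_type_def G_def using card_image[OF blk_inj] cPu blk_card by auto
  have partG: "partition_on X G"
  proof (rule partition_onI)
    show "\<Union> G = X"
    proof
      show "\<Union> G \<subseteq> X" unfolding G_def blk_def X_def using sub by blast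
      show "X \<subseteq> \<Union> G"
      proof
        fix z assume "z \<in> X"
        then obtain x v w where z: "z = pt (x,v,w)" "x \<in> S" "v < 3" unfolding X_def by auto
        obtain p where "p \<in> P" "x \<in> p" using rf_cov[OF rf z(2)] by blast
        thus "z \<in> \<Union> G" using z blk_iff unfolding G_def by blast
      qed
    qed
    show "disjnt p q" if pqG: "p \<in> G" "q \<in> G" "p \<noteq> q" for p q
    proof -
      obtain p0 q0 where pq: "p0 \<in> P" "q0 \<in> P" "p = blk p0" "q = blk q0" using pqG(1,2) unfolding G_def by blast
      show ?thesis unfolding disjnt_def
      proof (rule equals0I)
        fix z assume "z \<in> p \<inter> q"
        then obtain x v w where z: "z = pt (x,v,w)" "x \<in> p0" "v < 3" using pq unfolding blk_def by auto
        hence "x \<in> q0" using \<open>z \<in> p \<inter> q\<close> pq blk_iff by auto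
        hence "p0 = q0" using rf_parts[OF rf pq(1,2) z(2)] by simp
        thus False using pqG pq by simp
      qed
    qed
    show "{} \<notin> G"
    proof
      assume "{} \<in> G"
      then obtain p where "p \<in> P" "blk p = {}" unfolding G_def by auto
      moreover have "p \<noteq> {}" using partition_onD3[OF part] \<open>p \<in> P\<close> by blast
      ultimately show False using blk_mem by blast
    qed
  qed
  have dist: "\<forall>c\<in>C. \<forall>c'\<in>C. c \<noteq> c' \<longrightarrow> 6 \<le> hamming X c c'"
    unfolding C_def using key by blast
  have "gdc 2 2 6 X G C" unfolding gdc_def using fX partG words dist by blast
  thus ?thesis using ut2 cardC by blast
qed


end
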